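(* There is an absolute constant $c>0$ such that for all integers $n>f\ge 1$ there exists an $n$-vertex graph $G^*=(V,E)$ such that every $f$-EFD connectivity certificate $H$ of $G^*$ has at least $c\, f n \log(n/f)$ edges.
   Context: For a graph $G=(V,E)$ and a set of edges $F\subseteq E$, $\deg(F)$ denotes the maximum over vertices $x$ of the number of edges of $F$ incident to $x$. A subgraph $H\subseteq G$ (on the same vertex set) is an $f$-EFD connectivity certificate of $G$ if for every $F\subseteq E$ with $\deg(F)\le f$ and every pair $u,v\in V$, $u$ and $v$ are connected in $H-F$ if and only if they are connected in $G-F$ (where $G-F$ is $G$ with the edges of $F$ removed). *)

theory Defs
  imports Complex_Main
begin

definition simple_graph :: "'a set \<Rightarrow> 'a set set \<Rightarrow> bool" where
  "simple_graph V E \<longleftrightarrow> finite V \<and> (\<forall>e\<in>E. e \<subseteq> V \<and> card e = 2)"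

definition connected_in :: "'a set set \<Rightarrow> 'a \<Rightarrow> 'a \<Rightarrow> bool" where
  "connected_in E u v \<longleftrightarrow> (u, v) \<in> {(x, y). {x, y} \<in> E}\<^sup>*"

definition deg_le :: "'a set set \<Rightarrow> nat \<Rightarrow> bool" where
  "deg_le F f \<longleftrightarrow> (\<forall>x. card {e\<in>F. x \<in> e} \<le> f)"

definition EFD_certificate :: "nat \<Rightarrow> 'a set \<Rightarrow> 'a set set \<Rightarrow> 'a set set \<Rightarrow> bool" where
  "EFD_certificate f V E H \<longleftrightarrow> H \<subseteq> E \<and>
     (\<forall>F\<subseteq>E. deg_le F f \<longrightarrow> (\<forall>u\<in>V. \<forall>v\<in>V.
        connected_in (H - F) u v \<longleftrightarrow> connected_in (E - F) u v))"

end

theory Submission imports Defs "HOL-Library.Discrete_Functions"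
begin


lemma fb_bit: "bit (flip_bit i (x::nat)) j = (if j = i then \<not> bit x j else bit x j)"
  by (auto simp: bit_flip_bit_iff)

lemma fb_invol: "flip_bit i (flip_bit i (x::nat)) = x"
  by (rule bit_eqI) (simp add: fb_bit)

lemma fb_ne: "flip_bit i (x::nat) \<noteq> x"
  by (metis fb_bit)

lemma fb_less: "(x::nat) < 2^d \<Longrightarrow> i < d \<Longrightarrow> flip_bit i x < 2^d"
  by (metis take_bit_flip_bit_eq take_bit_nat_eq_self_iff not_le)

lemma vdiv: "(a::nat) < g \<Longrightarrow> (x*g+a) div g = x" by simp
lemma vmod: "(a::nat) < g \<Longrightarrow> (x*g+a) mod g = a" by simp

lemma vless: "(x::nat) < 2^d \<Longrightarrow> a < g \<Longrightarrow> x*g+a < 2^d*g"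
proof -
  assume "x < 2^d" "a < g"
  then have "Suc x \<le> 2^d" by simp
  then have "Suc x * g \<le> 2^d * g" by (rule mult_right_mono) simp
  then show ?thesis using \<open>a < g\<close> by simp
qed

definition cubeE :: "nat \<Rightarrow> nat \<Rightarrow> nat set set" where
  "cubeE g d = {{x*g+a, flip_bit i x*g+b} | x a b i. x < 2^d \<and> a < g \<and> b < g \<and> i < d}"

lemma cube_simple:
  assumes "2^d*g \<le> n" shows "simple_graph {0..<n} (cubeE g d)"
  unfolding simple_graph_def
proof safe
  fix e assume "e \<in> cubeE g d"
  then obtain x a b i where e: "e = {x*g+a, flip_bit i x*g+b}" and h: "x < 2^d" "a < g" "b < g" "i < d"
    unfolding cubeE_def by blast
  have l1: "x*g+a < n" using vless[OF h(1,2)] assms by simp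
  have l2: "flip_bit i x*g+b < n" using vless[OF fb_less[OF h(1,4)] h(3)] assms by simp
  have ne: "x*g+a \<noteq> flip_bit i x*g+b"
    using vdiv[OF h(2), of x] vdiv[OF h(3), of "flip_bit i x"] fb_ne[of i x] by metis
  show "card e = 2" using ne e by simp
  fix y assume "y \<in> e" then show "y \<in> {0..<n}" using e l1 l2 by auto
qed


lemma cube_forced:
  assumes gf: "g \<le> f" and sz: "2^d*g \<le> n" and cert: "EFD_certificate f {0..<n} (cubeE g d) H"
  shows "cubeE g d \<subseteq> H"
proof
  let ?E = "cubeE g d"
  fix e assume eE: "e \<in> ?E"
  show "e \<in> H"
  proof (rule ccontr)
    assume eH: "e \<notin> H"
    obtain x a b i where e: "e = {x*g+a, flip_bit i x*g+b}" and h: "x < 2^d" "a < g" "b < g" "i < d"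
      using eE unfolding cubeE_def by blast
    define u where "u = x*g+a"
    define v where "v = flip_bit i x*g+b"
    define S where "S = {w. bit (w div g) i = bit x i}"
    define cross where "cross = (\<lambda>e'. \<exists>p q. e' = {p,q} \<and> p \<in> S \<and> q \<notin> S)"
    define F where "F = {e'\<in>?E. e' \<noteq> e \<and> cross e'}"
    have HE: "H \<subseteq> ?E" using cert unfolding EFD_certificate_def by blast
    have FE: "F \<subseteq> ?E" unfolding F_def by blast
    have deg: "deg_le F f"
      unfolding deg_le_def
    proof
      fix w
      have sub: "{e'\<in>F. w \<in> e'} \<subseteq> (\<lambda>b'. {w, flip_bit i (w div g)*g + b'}) ` {..<g}"
      proof
        fix e' assume "e' \<in> {e'\<in>F. w \<in> e'}"
        then have e'E: "e' \<in> ?E" and cr: "cross e'" and we: "w \<in> e'" unfolding F_def by auto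
        obtain x' a' b' j where e': "e' = {x'*g+a', flip_bit j x'*g+b'}" and h': "x' < 2^d" "a' < g" "b' < g" "j < d"
          using e'E unfolding cubeE_def by blast
        obtain p q where pq: "e' = {p,q}" "p \<in> S" "q \<notin> S" using cr unfolding cross_def by blast
        have "bit x' i \<noteq> bit (flip_bit j x') i"
        proof -
          have "(p = x'*g+a' \<and> q = flip_bit j x'*g+b') \<or> (q = x'*g+a' \<and> p = flip_bit j x'*g+b')"
            using pq(1) e' by (metis doubleton_eq_iff)
          then show ?thesis using pq(2,3) unfolding S_def using vdiv[OF h'(2)] vdiv[OF h'(3)] by auto
        qed
        then have ji: "j = i" by (metis fb_bit)
        show "e' \<in> (\<lambda>b'. {w, flip_bit i (w div g)*g + b'}) ` {..<g}"
        proof (cases "w = x'*g+a'")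
          case True
          then have "e' = {w, flip_bit i (w div g)*g + b'}" using e' ji vdiv[OF h'(2)] by simp
          then show ?thesis using h'(3) by blast
        next
          case False
          then have w: "w = flip_bit j x'*g+b'" using we e' by auto
          then have "flip_bit i (w div g) = x'" using vdiv[OF h'(3)] ji fb_invol by simp
          then have "e' = {w, flip_bit i (w div g)*g + a'}" using e' w by auto
          then show ?thesis using h'(2) by blast
        qed
      qed
      have "card {e'\<in>F. w \<in> e'} \<le> card ((\<lambda>b'. {w, flip_bit i (w div g)*g + b'}) ` {..<g})"
        by (rule card_mono[OF _ sub]) simp
      also have "\<dots> \<le> g" using card_image_le[of "{..<g}"] by simp
      finally show "card {e'\<in>F. w \<in> e'} \<le> f" using gf by simp
    qed
    have un: "u \<in> {0..<n}" "v \<in> {0..<n}"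
      using vless[OF h(1,2)] vless[OF fb_less[OF h(1,4)] h(3)] sz unfolding u_def v_def by auto
    have "{u,v} \<in> ?E - F" using eE unfolding F_def e u_def v_def by auto
    then have "connected_in (?E - F) u v" unfolding connected_in_def by auto
    then have conn: "connected_in (H - F) u v"
      using cert FE deg un unfolding EFD_certificate_def by blast
    have inv: "q \<in> S" if "(p, q) \<in> {(y, z). {y, z} \<in> H - F}\<^sup>*" "p \<in> S" for p q
      using that
    proof (induction rule: rtrancl_induct)
      case base then show ?case .
    next
      case (step y z)
      then have yz: "{y,z} \<in> H" "{y,z} \<notin> F" "y \<in> S" by auto
      show ?case
      proof (rule ccontr)
        assume "z \<notin> S"
        then have "cross {y,z}" using yz(3) unfolding cross_def by blast
        moreover have "{y,z} \<noteq> e" using yz(1) eH by auto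
        ultimately have "{y,z} \<in> F" using yz(1) HE unfolding F_def by auto
        then show False using yz(2) by simp
      qed
    qed
    have "u \<in> S" unfolding S_def u_def using vdiv[OF h(2)] by simp
    moreover have "v \<notin> S" unfolding S_def v_def using vdiv[OF h(3)] fb_bit by simp
    ultimately show False using inv conn unfolding connected_in_def by blast
  qed
qed

lemma half_card:
  assumes "i < d"
  shows "2 * card {x::nat. x < 2^d \<and> \<not> bit x i} = 2^d"
proof -
  let ?A = "{x::nat. x < 2^d \<and> \<not> bit x i}"
  let ?B = "{x::nat. x < 2^d \<and> bit x i}"
  have B: "?B = flip_bit i ` ?A"
  proof
    show "?B \<subseteq> flip_bit i ` ?A"
    proof
      fix y assume y: "y \<in> ?B"
      then have "flip_bit i y \<in> ?A" using fb_less[OF _ assms] fb_bit by auto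
      then show "y \<in> flip_bit i ` ?A" using fb_invol by (metis image_eqI)
    qed
    show "flip_bit i ` ?A \<subseteq> ?B" using fb_less[OF _ assms] fb_bit by auto
  qed
  have inj: "inj_on (flip_bit i) ?A" by (metis inj_onI fb_invol)
  have cB: "card ?B = card ?A" using B card_image[OF inj] by simp
  have "{..<(2::nat)^d} = ?A \<union> ?B" by auto
  then have "card {..<(2::nat)^d} = card ?A + card ?B"
    by (simp add: card_Un_disjoint disjoint_iff)
  then show ?thesis using cB by simp
qed


lemma cube_count:
  "d * 2^d * g^2 \<le> 2 * card (cubeE g d)"
proof -
  define X where "X = (\<lambda>i. {x::nat. x < 2^d \<and> \<not> bit x i})"
  define T where "T = Sigma {..<d} (\<lambda>i. X i \<times> ({..<g} \<times> {..<g}))"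
  define \<phi> where "\<phi> = (\<lambda>(i::nat,(x::nat,(a::nat,b::nat))). {x*g+a, flip_bit i x*g+b})"
  have finX: "finite (X i)" for i unfolding X_def by simp
  have cT: "card T = (\<Sum>i<d. card (X i) * (g*g))"
    unfolding T_def by (simp add: card_SigmaI finX card_cartesian_product)
  have "2 * card T = (\<Sum>i<d. 2 * card (X i) * (g*g))"
    unfolding cT sum_distrib_left by (simp add: mult.assoc)
  also have "\<dots> = (\<Sum>i<d. 2^d * (g*g))"
    by (rule sum.cong) (auto simp: X_def half_card)
  also have "\<dots> = d * 2^d * g^2" by (simp add: power2_eq_square)
  finally have T2: "2 * card T = d * 2^d * g^2" .
  have img: "\<phi> ` T \<subseteq> cubeE g d"
    unfolding T_def \<phi>_def cubeE_def X_def by auto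
  have finE: "finite (cubeE g d)"
  proof -
    have "cubeE g d \<subseteq> Pow {0..<2^d*g}"
      using cube_simple[of d g "2^d*g"] unfolding simple_graph_def by auto
    then show ?thesis by (rule finite_subset) simp
  qed
  have inj: "inj_on \<phi> T"
  proof (rule inj_onI)
    fix s t assume sT: "s \<in> T" and tT: "t \<in> T" and eq: "\<phi> s = \<phi> t"
    obtain i x a b where s: "s = (i,x,a,b)" by (cases s) auto
    obtain i' x' a' b' where t: "t = (i',x',a',b')" by (cases t) auto
    have hs: "i < d" "x < 2^d" "\<not> bit x i" "a < g" "b < g" using sT s unfolding T_def X_def by auto
    have ht: "i' < d" "x' < 2^d" "\<not> bit x' i'" "a' < g" "b' < g" using tT t unfolding T_def X_def by auto
    have "{x*g+a, flip_bit i x*g+b} = {x'*g+a', flip_bit i' x'*g+b'}" using eq s t unfolding \<phi>_def by simp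
    then have c: "(x*g+a = x'*g+a' \<and> flip_bit i x*g+b = flip_bit i' x'*g+b') \<or>
               (x*g+a = flip_bit i' x'*g+b' \<and> flip_bit i x*g+b = x'*g+a')"
      by (metis doubleton_eq_iff)
    show "s = t"
    proof (cases "x*g+a = x'*g+a' \<and> flip_bit i x*g+b = flip_bit i' x'*g+b'")
      case True
      then have xx: "x = x'" "a = a'" using vdiv[OF hs(4)] vdiv[OF ht(4)] vmod[OF hs(4)] vmod[OF ht(4)] by metis+
      have ff: "flip_bit i x = flip_bit i' x'" "b = b'"
        using True vdiv[OF hs(5)] vdiv[OF ht(5)] vmod[OF hs(5)] vmod[OF ht(5)] by metis+
      have "i = i'"
      proof (rule ccontr)
        assume "i \<noteq> i'"
        then have "bit (flip_bit i x) i \<noteq> bit (flip_bit i' x) i" by (simp add: fb_bit)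
        then show False using ff xx by simp
      qed
      then show ?thesis using s t xx ff by simp
    next
      case False
      then have F: "x*g+a = flip_bit i' x'*g+b'" "flip_bit i x*g+b = x'*g+a'" using c by auto
      have e1: "x = flip_bit i' x'" using F(1) vdiv[OF hs(4)] vdiv[OF ht(5)] by metis
      have e2: "flip_bit i x = x'" using F(2) vdiv[OF hs(5)] vdiv[OF ht(4)] by metis
      have False
      proof (cases "i = i'")
        case True then show False using e2 hs(3) ht(3) by (metis fb_bit)
      next
        case False
        then have "bit x i' = (\<not> bit x' i')" using e1 fb_bit by simp
        moreover have "bit x' i' = bit x i'" using e2 False fb_bit by metis
        ultimately show False using ht(3) by simp
      qed
      then show ?thesis ..
    qed
  qed
  have "card T \<le> card (cubeE g d)"
    using card_inj_on_le[OF inj img finE] .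
  then show ?thesis using T2 by simp
qed

lemma cube_lower:
  assumes gf: "g \<le> f" and sz: "2^d*g \<le> n" and cert: "EFD_certificate f {0..<n} (cubeE g d) H"
  shows "real (d * 2^d * g^2) \<le> 2 * real (card H)"
proof -
  have HE: "H = cubeE g d" using cube_forced[OF gf sz cert] cert unfolding EFD_certificate_def by blast
  have "d * 2^d * g^2 \<le> 2 * card H" using cube_count[of d g] HE by simp
  then have "real (d * 2^d * g^2) \<le> real (2 * card H)" by (rule of_nat_mono)
  then show ?thesis by simp
qed

theorem mainTheorem2:
  shows "\<exists>c::real. c > 0 \<and>
    (\<forall>n f :: nat. 1 \<le> f \<and> f < n \<longrightarrow>
      (\<exists>E :: nat set set. simple_graph {0..<n} E \<and>
        (\<forall>H. EFD_certificate f {0..<n} E H \<longrightarrow>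
           real (card H) \<ge> c * real f * real n * ln (real n / real f))))"
proof (intro exI[of _ "1/8"] conjI allI impI)
  fix n f :: nat
  assume nf: "1 \<le> f \<and> f < n"
  have fpos: "real f > 0" using nf by simp
  have lnpos: "ln (real n / real f) \<ge> 0" using nf fpos by simp
  show "\<exists>E :: nat set set. simple_graph {0..<n} E \<and>
        (\<forall>H. EFD_certificate f {0..<n} E H \<longrightarrow>
           real (card H) \<ge> 1/8 * real f * real n * ln (real n / real f))"
  proof (cases "2*f \<le> n")
    case True
    define m where "m = n div f"
    define d where "d = floor_log m"
    have m2: "m \<ge> 2" unfolding m_def using True nf
      by (metis div_le_mono mult.commute nonzero_mult_div_cancel_left not_one_le_zero)
    have dm: "2^d \<le> m" unfolding d_def using floor_log_exp2_le m2 by simp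
    have md: "m < 2 * 2^d" unfolding d_def using floor_log_exp2_gt by simp
    have d1: "d \<ge> 1" using m2 md by (cases d) auto
    have sz: "2^d * f \<le> n" using dm unfolding m_def
      by (metis div_times_less_eq_dividend le_trans mult_le_mono1)
    have nlt: "n < f * (2 * 2^d)"
    proof -
      have "n < f * (m + 1)" unfolding m_def using nf
        by (metis add.commute div_mult_mod_eq mod_less_divisor mult.commute nat_add_left_cancel_less
            not_one_le_zero distrib_left mult.right_neutral not_gr0)
      also have "\<dots> \<le> f * (2*2^d)" using md by (intro mult_le_mono2) simp
      finally show ?thesis .
    qed
    show ?thesis
    proof (intro exI[of _ "cubeE f d"] conjI allI impI)
      show "simple_graph {0..<n} (cubeE f d)" by (rule cube_simple[OF sz])
      fix H assume cert: "EFD_certificate f {0..<n} (cubeE f d) H"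
      have low: "real (d * 2^d * f^2) \<le> 2 * real (card H)" by (rule cube_lower[OF le_refl sz cert])
      have "n \<le> f * (2 * 2^d)" using nlt by simp
      then have "real n \<le> real (f * (2 * 2^d))" by (rule of_nat_mono)
      then have nlt': "real n \<le> real f * (2 * 2^d)" by simp
      have "ln (real n / real f) \<le> ln (2 * 2^d)"
        using nlt' fpos nf by (subst ln_le_cancel_iff) (auto simp: field_simps)
      also have "\<dots> = (real d + 1) * ln 2" by (simp add: ln_mult ln_realpow algebra_simps)
      also have "\<dots> \<le> (real d + 1) * 1" using ln_2_less_1 by (intro mult_left_mono) auto
      also have "\<dots> \<le> 2 * real d" using d1 by simp
      finally have L: "ln (real n / real f) \<le> 2 * real d" .
      have "1/8 * real f * real n * ln (real n / real f) \<le> 1/8 * real f * (real f * (2 * 2^d)) * (2 * real d)"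
        using L nlt' lnpos fpos by (intro mult_mono) auto
      also have "\<dots> = real (d * 2^d * f^2) / 2" by (simp add: power2_eq_square)
      also have "\<dots> \<le> real (card H)" using low by simp
      finally show "1/8 * real f * real n * ln (real n / real f) \<le> real (card H)" .
    qed
  next
    case False
    define g where "g = n div 2"
    have sz: "2^1 * g \<le> n" unfolding g_def by simp
    have gf: "g \<le> f" unfolding g_def using False by simp
    have g2: "real n \<le> 4 * real g" using nf unfolding g_def by linarith
    show ?thesis
    proof (intro exI[of _ "cubeE g 1"] conjI allI impI)
      show "simple_graph {0..<n} (cubeE g 1)" by (rule cube_simple[OF sz])
      fix H assume cert: "EFD_certificate f {0..<n} (cubeE g 1) H"
      have low: "real (1 * 2^1 * g^2) \<le> 2 * real (card H)" by (rule cube_lower[OF gf sz cert])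
      have "ln (real n / real f) \<le> real n / real f - 1"
        using fpos nf by (intro ln_le_minus_one) simp
      then have L: "real f * ln (real n / real f) \<le> real n - real f"
        using fpos by (simp add: field_simps)
      have "1/8 * real f * real n * ln (real n / real f) = 1/8 * real n * (real f * ln (real n / real f))"
        by simp
      also have "\<dots> \<le> 1/8 * real n * (real n - real f)" using L by (intro mult_left_mono) auto
      also have "\<dots> \<le> 1/8 * real n * (real n / 2)" using False by (intro mult_left_mono) auto
      also have "\<dots> \<le> real g * real g"
      proof -
        have "real n * real n \<le> (4 * real g) * (4 * real g)" using g2 by (intro mult_mono) auto
        then show ?thesis by simp
      qed
      also have "\<dots> \<le> real (card H)" using low by (simp add: power2_eq_square)
      finally show "1/8 * real f * real n * ln (real n / real f) \<le> real (card H)" .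
    qed
  qed
qed simp

end
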